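(* Let $\mathit{TS}_1=(\mathcal{S}_1,\mathcal{E}_1,\mathcal{I}_1,\to_1)$, $\mathit{TS}_2=(\mathcal{S}_2,\mathcal{E}_2,\mathcal{I}_2,\to_2)$ be LTSs and let $\psi\subseteq\mathcal{E}_1^\omega\times\mathcal{E}_2^\omega$ be a safety relation. If $(\mathcal{I}_1,\mathcal{I}_2,\psi)\in\texttt{fe}$, then for every $\tau_1\in\mathit{Traces}(\mathcal{I}_1)$ there exists $\tau_2\in\mathit{Traces}(\mathcal{I}_2)$ with $(\tau_1,\tau_2)\in\psi$.
   Context: LTS $(\mathcal{S},\mathcal{E},\mathcal{I},\to)$: states, observable events, initial state, and $\to\subseteq\mathcal{S}\times(\mathcal{E}\cup\{\emptyset\})\times\mathcal{S}$, label $\emptyset$ marking silent steps. $\to^*$ is the reflexive transitive closure of silent steps; for $e\in\mathcal{E}$, $s\overset{e}{\rightsquigarrow}s'$ means $s\to^*s''\xrightarrow{e}s'$ for some $s''$. $\mathit{Traces}(s)$ is the set of $\tau\in\mathcal{E}^\omega$ such that some $\pi\in\mathcal{S}^\omega$ has $\pi_0=s$ and $\pi_i\overset{\tau[i]}{\rightsquigarrow}\pi_{i+1}$ for all $i$. Safety closure $|\psi|_{\mathit{safe}}=\{(\tau_1,\tau_2)\mid\forall n.\exists\tau_1',\tau_2'.(\tau_1[0..n)\tau_1',\tau_2[0..n)\tau_2')\in\psi\}$ ($\tau[0..n)$ = prefix of length $n$); $\psi$ is a safety relation iff $|\psi|_{\mathit{safe}}\subseteq\psi$. Derivative $\Delta_{e_1,e_2}(\psi)=\{(\tau_1,\tau_2)\mid(e_1\tau_1,e_2\tau_2)\in\psi\}$.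 For $R\subseteq\mathcal{S}_1\times\mathcal{S}_2\times\mathcal{P}(\mathcal{E}_1^\omega\times\mathcal{E}_2^\omega)$: $\texttt{feF}(R)=\{(s_1,s_2,\psi)\mid\forall e_1,s_1'.\ s_1\overset{e_1}{\rightsquigarrow}_1s_1'\Rightarrow\exists e_2,s_2'.\ s_2\overset{e_2}{\rightsquigarrow}_2s_2'\wedge\Delta_{e_1,e_2}(\psi)\neq\emptyset\wedge(s_1',s_2',\Delta_{e_1,e_2}(\psi))\in R\}$, a monotone operator; $\texttt{fe}$ is its greatest fixed point. *)

theory Defs
  imports Main
begin

text \<open>A transition is labelled by an 'e option; None is the silent label.
  Infinite words (elements of E^omega) are functions nat => 'e.\<close>

record ('s, 'e) lts =
  init :: 's
  trans :: "'s \<Rightarrow> 'e option \<Rightarrow> 's \<Rightarrow> bool"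

definition silent_star :: "('s, 'e) lts \<Rightarrow> 's \<Rightarrow> 's \<Rightarrow> bool" where
  "silent_star TS = (\<lambda>s s'. trans TS s None s')\<^sup>*\<^sup>*"

definition weak_step :: "('s, 'e) lts \<Rightarrow> 's \<Rightarrow> 'e \<Rightarrow> 's \<Rightarrow> bool" where
  "weak_step TS s e s' \<longleftrightarrow> (\<exists>s''. silent_star TS s s'' \<and> trans TS s'' (Some e) s')"

definition Traces :: "('s, 'e) lts \<Rightarrow> 's \<Rightarrow> (nat \<Rightarrow> 'e) set" where
  "Traces TS s = {\<tau>. \<exists>\<pi> :: nat \<Rightarrow> 's. \<pi> 0 = s \<and> (\<forall>i. weak_step TS (\<pi> i) (\<tau> i) (\<pi> (Suc i)))}"

definition prefix_app :: "(nat \<Rightarrow> 'e) \<Rightarrow> nat \<Rightarrow> (nat \<Rightarrow> 'e) \<Rightarrow> (nat \<Rightarrow> 'e)" where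
  "prefix_app \<tau> n \<tau>' = (\<lambda>i. if i < n then \<tau> i else \<tau>' (i - n))"

definition safe_closure :: "((nat \<Rightarrow> 'e1) \<times> (nat \<Rightarrow> 'e2)) set \<Rightarrow> ((nat \<Rightarrow> 'e1) \<times> (nat \<Rightarrow> 'e2)) set" where
  "safe_closure \<psi> = {(\<tau>1, \<tau>2). \<forall>n. \<exists>\<tau>1' \<tau>2'. (prefix_app \<tau>1 n \<tau>1', prefix_app \<tau>2 n \<tau>2') \<in> \<psi>}"

definition safety_relation :: "((nat \<Rightarrow> 'e1) \<times> (nat \<Rightarrow> 'e2)) set \<Rightarrow> bool" where
  "safety_relation \<psi> \<longleftrightarrow> safe_closure \<psi> \<subseteq> \<psi>"

definition scons :: "'e \<Rightarrow> (nat \<Rightarrow> 'e) \<Rightarrow> (nat \<Rightarrow> 'e)" where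
  "scons e \<tau> = (\<lambda>i. case i of 0 \<Rightarrow> e | Suc j \<Rightarrow> \<tau> j)"

definition deriv :: "'e1 \<Rightarrow> 'e2 \<Rightarrow> ((nat \<Rightarrow> 'e1) \<times> (nat \<Rightarrow> 'e2)) set \<Rightarrow> ((nat \<Rightarrow> 'e1) \<times> (nat \<Rightarrow> 'e2)) set" where
  "deriv e1 e2 \<psi> = {(\<tau>1, \<tau>2). (scons e1 \<tau>1, scons e2 \<tau>2) \<in> \<psi>}"

definition feF :: "('s1, 'e1) lts \<Rightarrow> ('s2, 'e2) lts
   \<Rightarrow> ('s1 \<times> 's2 \<times> ((nat \<Rightarrow> 'e1) \<times> (nat \<Rightarrow> 'e2)) set) set
   \<Rightarrow> ('s1 \<times> 's2 \<times> ((nat \<Rightarrow> 'e1) \<times> (nat \<Rightarrow> 'e2)) set) set" where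
  "feF TS1 TS2 R = {(s1, s2, \<psi>). \<forall>e1 s1'. weak_step TS1 s1 e1 s1' \<longrightarrow>
      (\<exists>e2 s2'. weak_step TS2 s2 e2 s2' \<and> deriv e1 e2 \<psi> \<noteq> {} \<and> (s1', s2', deriv e1 e2 \<psi>) \<in> R)}"

definition fe :: "('s1, 'e1) lts \<Rightarrow> ('s2, 'e2) lts
   \<Rightarrow> ('s1 \<times> 's2 \<times> ((nat \<Rightarrow> 'e1) \<times> (nat \<Rightarrow> 'e2)) set) set" where
  "fe TS1 TS2 = gfp (feF TS1 TS2)"

end

theory Submission
  imports Defs
begin

lemma feF_mono: "mono (feF TS1 TS2)"
  unfolding mono_def feF_def by blast

lemma fe_unfold: "fe TS1 TS2 = feF TS1 TS2 (fe TS1 TS2)"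
  unfolding fe_def by (rule gfp_unfold[OF feF_mono])

lemma prefix_scons: "prefix_app \<tau> n (scons (\<tau> n) a) = prefix_app \<tau> (Suc n) a"
  unfolding prefix_app_def scons_def
proof (rule ext)
  fix i show "(if i < n then \<tau> i else (case i - n of 0 \<Rightarrow> \<tau> n | Suc j \<Rightarrow> a j)) = (if i < Suc n then \<tau> i else a (i - Suc n))"
  proof (cases "i - n")
    case 0 then show ?thesis by (auto simp: less_Suc_eq)
  next
    case (Suc k) then have "k = i - Suc n" by arith
    with Suc show ?thesis by auto
  qed
qed

lemma prefix_shift: "(\<forall>i<n. \<sigma> i = \<tau> i) \<Longrightarrow> prefix_app \<tau> n (\<lambda>i. \<sigma> (i + n)) = \<sigma>"
  unfolding prefix_app_def by (rule ext) auto

theorem mainTheorem5: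
  fixes TS1 :: "('s1, 'e1) lts" and TS2 :: "('s2, 'e2) lts"
    and \<psi> :: "((nat \<Rightarrow> 'e1) \<times> (nat \<Rightarrow> 'e2)) set"
  assumes "safety_relation \<psi>"
    and "(init TS1, init TS2, \<psi>) \<in> fe TS1 TS2"
  shows "\<forall>\<tau>1 \<in> Traces TS1 (init TS1). \<exists>\<tau>2 \<in> Traces TS2 (init TS2). (\<tau>1, \<tau>2) \<in> \<psi>"
proof
  fix \<tau>1 assume "\<tau>1 \<in> Traces TS1 (init TS1)"
  then obtain \<pi>1 where p0: "\<pi>1 0 = init TS1" and pst: "\<And>i. weak_step TS1 (\<pi>1 i) (\<tau>1 i) (\<pi>1 (Suc i))"
    unfolding Traces_def by blast
  define P where "P n x p \<longleftrightarrow> weak_step TS2 (fst x) (fst p) (snd p) \<and> deriv (\<tau>1 n) (fst p) (snd x) \<noteq> {}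
      \<and> (\<pi>1 (Suc n), snd p, deriv (\<tau>1 n) (fst p) (snd x)) \<in> fe TS1 TS2" for n x p
  define nxt where "nxt n x = (SOME p. P n x p)" for n x
  define X where "X = rec_nat (init TS2, \<psi>) (\<lambda>n x. (snd (nxt n x), deriv (\<tau>1 n) (fst (nxt n x)) (snd x)))"
  have X0: "X 0 = (init TS2, \<psi>)" unfolding X_def by simp
  have XS: "X (Suc n) = (snd (nxt n (X n)), deriv (\<tau>1 n) (fst (nxt n (X n))) (snd (X n)))" for n
    unfolding X_def by simp
  have step: "P n x (nxt n x)" if "(\<pi>1 n, fst x, snd x) \<in> fe TS1 TS2" for n x
  proof -
    from that have "(\<pi>1 n, fst x, snd x) \<in> feF TS1 TS2 (fe TS1 TS2)" using fe_unfold by blast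
    then obtain e2 s2' where "weak_step TS2 (fst x) e2 s2'" "deriv (\<tau>1 n) e2 (snd x) \<noteq> {}"
      "(\<pi>1 (Suc n), s2', deriv (\<tau>1 n) e2 (snd x)) \<in> fe TS1 TS2"
      using pst[of n] unfolding feF_def by blast
    then have "P n x (e2, s2')" unfolding P_def by simp
    then show ?thesis unfolding nxt_def by (rule someI)
  qed
  have inv: "(\<pi>1 n, fst (X n), snd (X n)) \<in> fe TS1 TS2 \<and> P n (X n) (nxt n (X n))" for n
  proof (induction n)
    case 0 then show ?case using assms(2) p0 X0 step by simp
  next
    case (Suc n)
    then have "(\<pi>1 (Suc n), fst (X (Suc n)), snd (X (Suc n))) \<in> fe TS1 TS2"
      unfolding P_def XS by simp
    then show ?case using step by blast
  qed
  define \<tau>2 where "\<tau>2 n = fst (nxt n (X n))" for n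
  define \<pi>2 where "\<pi>2 n = fst (X n)" for n
  have "\<tau>2 \<in> Traces TS2 (init TS2)"
    unfolding Traces_def
  proof (intro CollectI exI conjI allI)
    show "\<pi>2 0 = init TS2" unfolding \<pi>2_def X0 by simp
    fix i show "weak_step TS2 (\<pi>2 i) (\<tau>2 i) (\<pi>2 (Suc i))"
      using inv[of i] unfolding P_def \<pi>2_def \<tau>2_def XS by simp
  qed
  moreover have Xchar: "snd (X n) = {(a, b). (prefix_app \<tau>1 n a, prefix_app \<tau>2 n b) \<in> \<psi>}" for n
  proof (induction n)
    case 0 then show ?case by (simp add: X0 prefix_app_def)
  next
    case (Suc n)
    show ?case unfolding XS snd_conv Suc deriv_def
      using prefix_scons[of \<tau>1 n] prefix_scons[of \<tau>2 n] unfolding \<tau>2_def by simp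
  qed
  have ne: "snd (X (Suc n)) \<noteq> {}" for n
    using inv[of n] unfolding P_def XS by simp
  have "\<forall>n. \<exists>\<tau>1' \<tau>2'. (prefix_app \<tau>1 n \<tau>1', prefix_app \<tau>2 n \<tau>2') \<in> \<psi>"
  proof
    fix n
    from ne[of n] obtain a b where ab: "(prefix_app \<tau>1 (Suc n) a, prefix_app \<tau>2 (Suc n) b) \<in> \<psi>"
      unfolding Xchar by blast
    let ?s1 = "prefix_app \<tau>1 (Suc n) a" and ?s2 = "prefix_app \<tau>2 (Suc n) b"
    have "prefix_app \<tau>1 n (\<lambda>i. ?s1 (i + n)) = ?s1" "prefix_app \<tau>2 n (\<lambda>i. ?s2 (i + n)) = ?s2"
    proof -
      have h1: "\<forall>i<n. ?s1 i = \<tau>1 i" and h2: "\<forall>i<n. ?s2 i = \<tau>2 i" by (simp_all add: prefix_app_def)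
      show "prefix_app \<tau>1 n (\<lambda>i. ?s1 (i + n)) = ?s1" by (rule prefix_shift[OF h1])
      show "prefix_app \<tau>2 n (\<lambda>i. ?s2 (i + n)) = ?s2" by (rule prefix_shift[OF h2])
    qed
    with ab have "(prefix_app \<tau>1 n (\<lambda>i. ?s1 (i + n)), prefix_app \<tau>2 n (\<lambda>i. ?s2 (i + n))) \<in> \<psi>" by simp
    then show "\<exists>\<tau>1' \<tau>2'. (prefix_app \<tau>1 n \<tau>1', prefix_app \<tau>2 n \<tau>2') \<in> \<psi>" by blast
  qed
  then have "(\<tau>1, \<tau>2) \<in> safe_closure \<psi>" unfolding safe_closure_def by simp
  then have "(\<tau>1, \<tau>2) \<in> \<psi>" using assms(1) unfolding safety_relation_def by blast
  ultimately show "\<exists>\<tau>2 \<in> Traces TS2 (init TS2). (\<tau>1, \<tau>2) \<in> \<psi>" by blast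
qed

end
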